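(* Let $C>0$, $\mathbf{w}^t\in\mathbb{R}^d$, let $\theta_1^t\le\dots\le\theta_{K-1}^t$ be real thresholds, $\mathbf{x}^t\in\mathbb{R}^d$ and integers $1\le y_l^t\le y_r^t\le K$; let $I_t=\{1,\dots,y_l^t-1\}\cup\{y_r^t,\dots,K-1\}$. Let $(\mathbf{w}^{t+1},\boldsymbol\theta^{t+1})$ be the PA-II update, i.e. the $(\mathbf{w},\boldsymbol\theta)$-part of the minimizer over $\mathbf{w}\in\mathbb{R}^d$, $\boldsymbol\theta\in\mathbb{R}^{K-1}$, $(\xi_i)_{i\in I_t}\in\mathbb{R}^{I_t}$ of $$\tfrac12\Vert\mathbf{w}-\mathbf{w}^t\Vert^2+\tfrac12\Vert\boldsymbol\theta-\boldsymbol\theta^t\Vert^2+C\sum_{i\in I_t}\xi_i^2$$ subject to $\mathbf{w}\cdot\mathbf{x}^t-\theta_i\ge 1-\xi_i$ for $i=1,\dots,y_l^t-1$ and $\mathbf{w}\cdot\mathbf{x}^t-\theta_i\le -1+\xi_i$ for $i=y_r^t,\dots,K-1$. Then $\theta_1^{t+1}\le\theta_2^{t+1}\le\dots\le\theta_{K-1}^{t+1}$.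
   Context: Online ranking into $K$ ordered classes with interval labels $[y_l^t,y_r^t]$: a ranker is $(\mathbf{w},\boldsymbol\theta)$, $\boldsymbol\theta=(\theta_1,\dots,\theta_{K-1})$, predicting $\min\{i:\mathbf{w}\cdot\mathbf{x}-\theta_i<0\}$ with $\theta_K=\infty$. PA-II is the passive-aggressive variant with squared slack penalty and parameter $C$ that at each trial computes the exact solution of the stated convex program. *)

theory Defs
  imports "HOL-Analysis.Analysis"
begin

text \<open>Thresholds and slacks are functions on nat; only indices 1..K-1 (resp. the
index set I_t) matter.\<close>

definition pa_index_set :: "nat \<Rightarrow> nat \<Rightarrow> nat \<Rightarrow> nat set" where
  "pa_index_set yl yr K = {1..<yl} \<union> {yr..<K}"

definition pa2_feasible ::
  "nat \<Rightarrow> nat \<Rightarrow> nat \<Rightarrow> real^'d \<Rightarrow> real^'d \<Rightarrow> (nat \<Rightarrow> real) \<Rightarrow> (nat \<Rightarrow> real) \<Rightarrow> bool" where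
  "pa2_feasible yl yr K x w \<theta> \<xi> \<longleftrightarrow>
     (\<forall>i\<in>{1..<yl}. w \<bullet> x - \<theta> i \<ge> 1 - \<xi> i) \<and>
     (\<forall>i\<in>{yr..<K}. w \<bullet> x - \<theta> i \<le> -1 + \<xi> i)"

definition pa2_objective ::
  "real \<Rightarrow> nat \<Rightarrow> nat \<Rightarrow> nat \<Rightarrow> real^'d \<Rightarrow> (nat \<Rightarrow> real)
   \<Rightarrow> real^'d \<Rightarrow> (nat \<Rightarrow> real) \<Rightarrow> (nat \<Rightarrow> real) \<Rightarrow> real" where
  "pa2_objective C yl yr K wt \<theta>t w \<theta> \<xi> =
     (1/2) * (norm (w - wt))^2 + (1/2) * (\<Sum>i\<in>{1..<K}. (\<theta> i - \<theta>t i)^2)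
     + C * (\<Sum>i\<in>pa_index_set yl yr K. (\<xi> i)^2)"

definition pa2_minimizer ::
  "real \<Rightarrow> nat \<Rightarrow> nat \<Rightarrow> nat \<Rightarrow> real^'d \<Rightarrow> real^'d \<Rightarrow> (nat \<Rightarrow> real)
   \<Rightarrow> real^'d \<Rightarrow> (nat \<Rightarrow> real) \<Rightarrow> (nat \<Rightarrow> real) \<Rightarrow> bool" where
  "pa2_minimizer C yl yr K x wt \<theta>t w \<theta> \<xi> \<longleftrightarrow>
     pa2_feasible yl yr K x w \<theta> \<xi> \<and>
     (\<forall>w' \<theta>' \<xi>'. pa2_feasible yl yr K x w' \<theta>' \<xi>' \<longrightarrow>
        pa2_objective C yl yr K wt \<theta>t w \<theta> \<xi> \<le> pa2_objective C yl yr K wt \<theta>t w' \<theta>' \<xi>')"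

end

theory Submission
  imports Defs
begin

lemma sum_two_split:
  fixes f :: "nat \<Rightarrow> real"
  assumes "finite A" "i \<in> A" "j \<in> A" "i \<noteq> j"
  shows "sum f A = f i + f j + sum f (A - {i, j})"
proof -
  have "sum f A = f i + sum f (A - {i})" using assms by (simp add: sum.remove)
  also have "sum f (A - {i}) = f j + sum f (A - {i} - {j})"
    using assms by (intro sum.remove) auto
  finally show ?thesis by (simp add: insert_commute Diff_insert2[symmetric] set_diff_eq)
qed

lemma sum_two_change:
  fixes f g :: "nat \<Rightarrow> real"
  assumes "finite A" "i \<in> A" "j \<in> A" "i \<noteq> j" "\<And>k. k \<in> A \<Longrightarrow> k \<noteq> i \<Longrightarrow> k \<noteq> j \<Longrightarrow> f k = g k"
  shows "sum f A - sum g A = f i + f j - g i - g j"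
proof -
  have "sum f (A - {i, j}) = sum g (A - {i, j})" using assms(5) by (intro sum.cong) auto
  then show ?thesis using sum_two_split[OF assms(1-4), of f] sum_two_split[OF assms(1-4), of g] by simp
qed

theorem theorem3:
  fixes C :: real and K yl yr :: nat
    and x wt w :: "real^'d" and \<theta>t \<theta> \<xi> :: "nat \<Rightarrow> real"
  assumes "C > 0"
    and "\<And>i j. 1 \<le> i \<Longrightarrow> i \<le> j \<Longrightarrow> j < K \<Longrightarrow> \<theta>t i \<le> \<theta>t j"
    and "1 \<le> yl" and "yl \<le> yr" and "yr \<le> K"
    and "pa2_minimizer C yl yr K x wt \<theta>t w \<theta> \<xi>"
  shows "\<forall>i j. 1 \<le> i \<longrightarrow> i \<le> j \<longrightarrow> j < K \<longrightarrow> \<theta> i \<le> \<theta> j"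
proof (rule ccontr)
  assume "\<not> ?thesis"
  then obtain i j where ij: "1 \<le> i" "i \<le> j" "j < K" "\<theta> i > \<theta> j" by (auto simp: not_le)
  then have ineq: "i \<noteq> j" "i < j" by (auto simp: order.order_iff_strict)
  define m where "m = (\<theta> i + \<theta> j)/2"
  define \<theta>' where "\<theta>' = \<theta>(i:=m, j:=m)"
  define same where "same = ((i < yl \<and> j < yl) \<or> (yr \<le> i \<and> yr \<le> j))"
  define n where "n = (\<xi> i + \<xi> j)/2"
  define \<xi>' where "\<xi>' = (if same then \<xi>(i:=n, j:=n) else \<xi>)"
  let ?s = "w \<bullet> x"
  have F: "pa2_feasible yl yr K x w \<theta> \<xi>" using assms(6) unfolding pa2_minimizer_def by blast
  have lo: "\<And>k. 1 \<le> k \<Longrightarrow> k < yl \<Longrightarrow> ?s - \<theta> k \<ge> 1 - \<xi> k" using F unfolding pa2_feasible_def by auto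
  have up: "\<And>k. yr \<le> k \<Longrightarrow> k < K \<Longrightarrow> ?s - \<theta> k \<le> -1 + \<xi> k" using F unfolding pa2_feasible_def by auto
  have mlt: "m < \<theta> i" "\<theta> j < m" using ij(4) by (auto simp: m_def)
  have feas: "pa2_feasible yl yr K x w \<theta>' \<xi>'"
    unfolding pa2_feasible_def
  proof (intro conjI ballI)
    fix k assume k: "k \<in> {1..<yl}"
    show "?s - \<theta>' k \<ge> 1 - \<xi>' k"
    proof (cases "k = i \<or> k = j")
      case False then show ?thesis using lo[of k] k by (auto simp: \<theta>'_def \<xi>'_def)
    next
      case True
      show ?thesis
      proof (cases same)
        case s: True
        then have "i < yl" "j < yl" using k True ineq same_def assms by auto
        then have "?s - \<theta> i \<ge> 1 - \<xi> i" "?s - \<theta> j \<ge> 1 - \<xi> j" using lo ij by auto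
        then show ?thesis using True s by (auto simp: \<theta>'_def \<xi>'_def m_def n_def field_simps)
      next
        case s: False
        then have "k = i" using k True ineq same_def by auto
        then show ?thesis using lo[of i] k s mlt ineq by (auto simp: \<theta>'_def \<xi>'_def)
      qed
    qed
  next
    fix k assume k: "k \<in> {yr..<K}"
    show "?s - \<theta>' k \<le> -1 + \<xi>' k"
    proof (cases "k = i \<or> k = j")
      case False then show ?thesis using up[of k] k by (auto simp: \<theta>'_def \<xi>'_def)
    next
      case True
      show ?thesis
      proof (cases same)
        case s: True
        then have "yr \<le> i" "yr \<le> j" using k True ineq same_def assms by auto
        then have "?s - \<theta> i \<le> -1 + \<xi> i" "?s - \<theta> j \<le> -1 + \<xi> j" using up ij by auto
        then show ?thesis using True s by (auto simp: \<theta>'_def \<xi>'_def m_def n_def field_simps)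
      next
        case s: False
        then have "k = j" using k True ineq same_def by auto
        then show ?thesis using up[of j] k s mlt ineq by (auto simp: \<theta>'_def \<xi>'_def)
      qed
    qed
  qed
  have le: "pa2_objective C yl yr K wt \<theta>t w \<theta> \<xi> \<le> pa2_objective C yl yr K wt \<theta>t w \<theta>' \<xi>'"
    using assms(6) feas unfolding pa2_minimizer_def by blast
  have th_i: "\<theta>t i \<le> \<theta>t j" using assms(2) ij by auto
  have key: "((\<theta> i - \<theta>t i)^2 + (\<theta> j - \<theta>t j)^2) - ((m - \<theta>t i)^2 + (m - \<theta>t j)^2)
      = (\<theta> i - \<theta> j) * (\<theta>t j - \<theta>t i) + (\<theta> i - \<theta> j)^2 / 2"
    by (simp add: m_def power2_eq_square algebra_simps divide_simps)
  have "(\<theta> i - \<theta> j) * (\<theta>t j - \<theta>t i) \<ge> 0" using ij th_i by simp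
  moreover have "(\<theta> i - \<theta> j)^2 / 2 > 0" using ij by simp
  ultimately have pos: "((\<theta> i - \<theta>t i)^2 + (\<theta> j - \<theta>t j)^2) - ((m - \<theta>t i)^2 + (m - \<theta>t j)^2) > 0"
    using key by linarith
  have "(\<Sum>k\<in>{1..<K}. (\<theta> k - \<theta>t k)^2) - (\<Sum>k\<in>{1..<K}. (\<theta>' k - \<theta>t k)^2)
      = (\<theta> i - \<theta>t i)^2 + (\<theta> j - \<theta>t j)^2 - (\<theta>' i - \<theta>t i)^2 - (\<theta>' j - \<theta>t j)^2"
    using ij ineq by (intro sum_two_change) (auto simp: \<theta>'_def)
  then have thsum: "(\<Sum>k\<in>{1..<K}. (\<theta>' k - \<theta>t k)^2) < (\<Sum>k\<in>{1..<K}. (\<theta> k - \<theta>t k)^2)"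
    using pos ineq by (simp add: \<theta>'_def)
  have xisum: "(\<Sum>k\<in>pa_index_set yl yr K. (\<xi>' k)^2) \<le> (\<Sum>k\<in>pa_index_set yl yr K. (\<xi> k)^2)"
  proof (cases same)
    case False then show ?thesis by (simp add: \<xi>'_def)
  next
    case True
    then have mem: "i \<in> pa_index_set yl yr K" "j \<in> pa_index_set yl yr K"
      using ij same_def unfolding pa_index_set_def by auto
    have "(\<Sum>k\<in>pa_index_set yl yr K. (\<xi> k)^2) - (\<Sum>k\<in>pa_index_set yl yr K. (\<xi>' k)^2)
      = (\<xi> i)^2 + (\<xi> j)^2 - (\<xi>' i)^2 - (\<xi>' j)^2"
      using mem ineq by (intro sum_two_change) (auto simp: \<xi>'_def pa_index_set_def)
    moreover have "(\<xi> i)^2 + (\<xi> j)^2 - n^2 - n^2 = (\<xi> i - \<xi> j)^2 / 2"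
      by (simp add: n_def power2_eq_square algebra_simps divide_simps)
    moreover have "(\<xi> i - \<xi> j)^2 / 2 \<ge> 0" by simp
    moreover have "\<xi>' i = n" "\<xi>' j = n" using True ineq by (auto simp: \<xi>'_def)
    ultimately show ?thesis by (metis diff_ge_0_iff_ge)
  qed
  have "C * (\<Sum>k\<in>pa_index_set yl yr K. (\<xi>' k)^2) \<le> C * (\<Sum>k\<in>pa_index_set yl yr K. (\<xi> k)^2)"
    using xisum assms(1) by (simp add: mult_left_mono)
  then have "pa2_objective C yl yr K wt \<theta>t w \<theta>' \<xi>' < pa2_objective C yl yr K wt \<theta>t w \<theta> \<xi>"
    using thsum unfolding pa2_objective_def by linarith
  then show False using le by linarith
qed

end
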